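(* Let $nw=(a_1\cdots a_n,\nu)\in\mathrm{NW}(\Delta)$, with $\Phi_\circ(nw)=([n],\lambda,\le_1^\circ,\le_2^\circ)$ and $\Phi_\bullet(nw)=([n],\lambda,\le_1^\bullet,\le_2^\bullet)$, and let $1\le i<j\le n$. Then the following are equivalent: (i) $j\le_2^\circ i$; (ii) $i\le_2^\bullet j$; (iii) there exists $(k,\ell)\in\nu$ with $1\le k\le i<j\le\ell\le n$ such that $k$ has odd nesting depth and there is no $(k',\ell')\in\nu$ with $k<k'\le i<j\le\ell'<\ell$.
   Context: Nested words: $\Delta$ finite alphabet. A nesting relation of width $n$ is a relation $\nu$ on $[n]=\{1..n\}$ with: $\nu(i,j)\Rightarrow i<j$; $\nu(i,j),\nu(i,j')\Rightarrow j=j'$ and $\nu(i,j),\nu(i',j)\Rightarrow i=i'$; $\nu(i,j),\nu(i',j'),i<i'\Rightarrow j<i'$ or $j'<j$. A nested word is $(w,\nu)$ with $w=a_1\cdots a_n\in\Delta^+$ and $\nu$ a nesting relation of width $n$; $\mathrm{NW}(\Delta)$ is their set. If $\nu(i,j)$, $i$ is a call and $j$ a return position. The factor $nw[i,j]$ ($i\le j$) is $(a_i\cdots a_j,\{(k-i+1,\ell-i+1):(k,\ell)\in\nu,\ i\le k,\ell\le j\})$. The nesting depth of a call position $k$ is the number of pairs $(k',\ell')\in\nu$ with $k'\le k\le\ell'$ (the number of calls open at $k$, including $k$ itself). Texts: a text over $\Delta$ is $(V,\lambda,\le_1,\le_2)$ with $V$ finite nonempty, $\lambda:V\to\Delta$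 and $\le_1,\le_2$ linear orders on $V$, considered up to isomorphism. For texts on disjoint domains $V,V'$: $\tau\circ\tau'=(V\cup V',\lambda\cup\lambda',\le_1\cup\le_1'\cup V\times V',\le_2\cup\le_2'\cup V\times V')$ and $\tau\bullet\tau'=(V\cup V',\lambda\cup\lambda',\le_1\cup\le_1'\cup V\times V',\le_2\cup\le_2'\cup V'\times V)$. A letter $a$ also denotes the singleton text labeled $a$. Encodings $\Phi_\circ,\Phi_\bullet:\mathrm{NW}(\Delta)\to$ texts, defined recursively: for $nw=(a_1\cdots a_n,\nu)$, if $\nu=\emptyset$ then $\Phi_\circ(nw)=a_1\circ\cdots\circ a_n$ and $\Phi_\bullet(nw)=a_1\bullet\cdots\bullet a_n$; otherwise let $i$ be the least call position, $j$ its return position, $nw'=nw[i+1,j-1]$, $nw''=nw[j+1,n]$, and $\Phi_\circ(nw)=a_1\circ\cdots\circ a_{i-1}\circ(a_i\bullet\Phi_\bullet(nw')\bullet a_j)\circ\Phi_\circ(nw'')$, $\Phi_\bullet(nw)=a_1\bullet\cdots\bullet a_{i-1}\bullet(a_i\circ\Phi_\circ(nw')\circ a_j)\bullet\Phi_\bullet(nw'')$, where factors for empty intervals ($i+1=j$, $j=n$, $i=1$) are omitted. The domain of $\Phi_\circ(nw)$ and of $\Phi_\bullet(nw)$ is identified with $[n]$ so that $\le_1$ is the natural order of $[n]$ and position $i$ is labeled $a_i$. *)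

theory Defs
  imports Main
begin

text \<open>A nested word over the alphabet 'a is a pair (w, nu) with w a nonempty list
  (letters a_1 ... a_n, position k carries w ! (k-1)) and nu a nesting relation of width n.\<close>

definition nesting_relation :: "nat \<Rightarrow> (nat \<times> nat) set \<Rightarrow> bool" where
  "nesting_relation n nu \<longleftrightarrow>
     nu \<subseteq> {1..n} \<times> {1..n} \<and>
     (\<forall>i j. (i, j) \<in> nu \<longrightarrow> i < j) \<and>
     (\<forall>i j j'. (i, j) \<in> nu \<and> (i, j') \<in> nu \<longrightarrow> j = j') \<and>
     (\<forall>i i' j. (i, j) \<in> nu \<and> (i', j) \<in> nu \<longrightarrow> i = i') \<and>
     (\<forall>i j i' j'. (i, j) \<in> nu \<and> (i', j') \<in> nu \<and> i < i' \<longrightarrow> j < i' \<or> j' < j)"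

definition nested_word :: "'a list \<Rightarrow> (nat \<times> nat) set \<Rightarrow> bool" where
  "nested_word w nu \<longleftrightarrow> w \<noteq> [] \<and> nesting_relation (length w) nu"

definition nesting_depth :: "(nat \<times> nat) set \<Rightarrow> nat \<Rightarrow> nat" where
  "nesting_depth nu k = card {(k', l'). (k', l') \<in> nu \<and> k' \<le> k \<and> k \<le> l'}"

record 'a ntext =
  tdom :: "nat set"
  tlab :: "nat \<Rightarrow> 'a"
  tle1 :: "(nat \<times> nat) set"
  tle2 :: "(nat \<times> nat) set"

definition empty_text :: "'a ntext" where
  "empty_text = \<lparr>tdom = {}, tlab = (\<lambda>_. undefined), tle1 = {}, tle2 = {}\<rparr>"

definition tcirc :: "'a ntext \<Rightarrow> 'a ntext \<Rightarrow> 'a ntext" where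
  "tcirc t t' = \<lparr>tdom = tdom t \<union> tdom t',
     tlab = (\<lambda>x. if x \<in> tdom t then tlab t x else tlab t' x),
     tle1 = tle1 t \<union> tle1 t' \<union> tdom t \<times> tdom t',
     tle2 = tle2 t \<union> tle2 t' \<union> tdom t \<times> tdom t'\<rparr>"

definition tbullet :: "'a ntext \<Rightarrow> 'a ntext \<Rightarrow> 'a ntext" where
  "tbullet t t' = \<lparr>tdom = tdom t \<union> tdom t',
     tlab = (\<lambda>x. if x \<in> tdom t then tlab t x else tlab t' x),
     tle1 = tle1 t \<union> tle1 t' \<union> tdom t \<times> tdom t',
     tle2 = tle2 t \<union> tle2 t' \<union> tdom t' \<times> tdom t\<rparr>"

definition tprod :: "bool \<Rightarrow> 'a ntext \<Rightarrow> 'a ntext \<Rightarrow> 'a ntext" where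
  "tprod b = (if b then tcirc else tbullet)"

definition sing :: "'a list \<Rightarrow> nat \<Rightarrow> 'a ntext" where
  "sing w k = \<lparr>tdom = {k}, tlab = (\<lambda>_. w ! (k - 1)), tle1 = {(k, k)}, tle2 = {(k, k)}\<rparr>"

definition chain :: "bool \<Rightarrow> 'a list \<Rightarrow> nat \<Rightarrow> nat \<Rightarrow> 'a ntext" where
  "chain b w p q = foldl (\<lambda>t k. tprod b t (sing w k)) empty_text [p..<Suc q]"

text \<open>Encoding of the factor nw[p,q], with domain kept as the original positions
  {p..q}; fuel f bounds the recursion depth. Empty factors give the empty text,
  which is a unit for both products (this realises "omitted").\<close>
fun enc :: "nat \<Rightarrow> bool \<Rightarrow> 'a list \<Rightarrow> (nat \<times> nat) set \<Rightarrow> nat \<Rightarrow> nat \<Rightarrow> 'a ntext" where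
  "enc 0 b w nu p q = empty_text"
| "enc (Suc f) b w nu p q =
    (if q < p then empty_text
     else if {(k, l). (k, l) \<in> nu \<and> p \<le> k \<and> l \<le> q} = {} then chain b w p q
     else
       (let i = (LEAST k. \<exists>l. (k, l) \<in> nu \<and> p \<le> k \<and> l \<le> q);
            j = (THE l. (i, l) \<in> nu)
        in tprod b (chain b w p (i - 1))
             (tprod b
               (tprod (\<not> b) (tprod (\<not> b) (sing w i) (enc f (\<not> b) w nu (i + 1) (j - 1))) (sing w j))
               (enc f b w nu (j + 1) q))))"

definition Phi_circ :: "'a list \<Rightarrow> (nat \<times> nat) set \<Rightarrow> 'a ntext" where
  "Phi_circ w nu = enc (length w) True w nu 1 (length w)"

definition Phi_bullet :: "'a list \<Rightarrow> (nat \<times> nat) set \<Rightarrow> 'a ntext" where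
  "Phi_bullet w nu = enc (length w) False w nu 1 (length w)"

end

theory Submission
  imports Defs
begin

lemma nest:
  assumes N: "nesting_relation n nu"
  shows N1: "\<And>k l. (k,l)\<in>nu \<Longrightarrow> k<l" and N2: "\<And>k l l'. (k,l)\<in>nu \<Longrightarrow> (k,l')\<in>nu \<Longrightarrow> l=l'"
    and N2': "\<And>k k' l. (k,l)\<in>nu \<Longrightarrow> (k',l)\<in>nu \<Longrightarrow> k=k'"
    and N3: "\<And>a b c d. (a,b)\<in>nu \<Longrightarrow> (c,d)\<in>nu \<Longrightarrow> a<c \<Longrightarrow> b<c \<or> d<b"
    and N4: "\<And>k l. (k,l)\<in>nu \<Longrightarrow> 1\<le>k \<and> l \<le> n"
proof -
  have h: "nu \<subseteq> {1..n} \<times> {1..n} \<and> (\<forall>i j. (i, j) \<in> nu \<longrightarrow> i < j) \<and> (\<forall>i j j'. (i, j) \<in> nu \<and> (i, j') \<in> nu \<longrightarrow> j = j') \<and> (\<forall>i i' j. (i, j) \<in> nu \<and> (i', j) \<in> nu \<longrightarrow> i = i') \<and> (\<forall>i j i' j'. (i, j) \<in> nu \<and> (i', j') \<in> nu \<and> i < i' \<longrightarrow> j < i' \<or> j' < j)" using N unfolding nesting_relation_def by assumption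
  have h0: "nu \<subseteq> {1..n} \<times> {1..n}" and h1: "\<forall>i j. (i, j) \<in> nu \<longrightarrow> i < j"
    and h2: "\<forall>i j j'. (i, j) \<in> nu \<and> (i, j') \<in> nu \<longrightarrow> j = j'"
    and h3: "\<forall>i i' j. (i, j) \<in> nu \<and> (i', j) \<in> nu \<longrightarrow> i = i'"
    and h4: "\<forall>i j i' j'. (i, j) \<in> nu \<and> (i', j') \<in> nu \<and> i < i' \<longrightarrow> j < i' \<or> j' < j"
    using h by (blast elim!: conjE)+
  show "\<And>k l. (k,l)\<in>nu \<Longrightarrow> k<l" using h1 by simp
  show "\<And>k l l'. (k,l)\<in>nu \<Longrightarrow> (k,l')\<in>nu \<Longrightarrow> l=l'" using h2 by blast
  show "\<And>k k' l. (k,l)\<in>nu \<Longrightarrow> (k',l)\<in>nu \<Longrightarrow> k=k'" using h3 by blast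
  show "\<And>a b c d. (a,b)\<in>nu \<Longrightarrow> (c,d)\<in>nu \<Longrightarrow> a<c \<Longrightarrow> b<c \<or> d<b" using h4 by blast
  show "\<And>k l. (k,l)\<in>nu \<Longrightarrow> 1\<le>k \<and> l \<le> n" using h0 by auto
qed


lemma tprod_dom[simp]: "tdom (tprod b t t') = tdom t \<union> tdom t'"
  by (simp add: tprod_def tcirc_def tbullet_def)
lemma tprod_le2: "(x,y) \<in> tle2 (tprod b t t') \<longleftrightarrow> (x,y)\<in>tle2 t \<or> (x,y)\<in>tle2 t' \<or>
   (if b then x\<in>tdom t \<and> y\<in>tdom t' else y\<in>tdom t \<and> x\<in>tdom t')"
  by (auto simp add: tprod_def tcirc_def tbullet_def)
lemma empty_simps[simp]: "tdom empty_text = {}" "tle2 empty_text = {}"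
  by (simp_all add: empty_text_def)
lemma sing_simps[simp]: "tdom (sing w k) = {k}" "tle2 (sing w k) = {(k,k)}"
  by (simp_all add: sing_def)

lemma chain_Suc: "p \<le> Suc q \<Longrightarrow> chain b w p (Suc q) = tprod b (chain b w p q) (sing w (Suc q))"
  by (simp add: chain_def)
lemma chain_empty: "q < p \<Longrightarrow> chain b w p q = empty_text"
  by (simp add: chain_def)

lemma chain_char: "tdom (chain b w p q) = {p..q} \<and> (\<forall>x y. (x,y)\<in>tle2 (chain b w p q) \<longleftrightarrow>
   x\<in>{p..q} \<and> y\<in>{p..q} \<and> (x=y \<or> ((x<y) \<longleftrightarrow> b)))"
proof (induction q)
  case 0
  show ?case
  proof (cases "p = 0")
    case True
    then have "chain b w p 0 = tprod b empty_text (sing w 0)" by (simp add: chain_def)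
    then show ?thesis using True by (auto simp: tprod_le2)
  next
    case False
    then show ?thesis by (simp add: chain_empty)
  qed
next
  case (Suc q)
  show ?case
  proof (cases "p \<le> Suc q")
    case True
    then show ?thesis using Suc by (auto simp: chain_Suc tprod_le2 split: if_splits)
  next
    case False
    then show ?thesis by (simp add: chain_empty)
  qed
qed

definition S :: "(nat \<times> nat) set \<Rightarrow> nat \<Rightarrow> nat \<Rightarrow> nat \<Rightarrow> nat \<Rightarrow> (nat \<times> nat) set" where
  "S nu p q x y = {(k,l). (k,l)\<in>nu \<and> p\<le>k \<and> l\<le>q \<and> k\<le>x \<and> y\<le>l}"
definition cc :: "(nat \<times> nat) set \<Rightarrow> nat \<Rightarrow> nat \<Rightarrow> nat \<Rightarrow> nat \<Rightarrow> nat" where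
  "cc nu p q x y = card (S nu p q (min x y) (max x y))"

definition charz :: "'a ntext \<Rightarrow> nat set \<Rightarrow> (nat \<Rightarrow> nat \<Rightarrow> bool) \<Rightarrow> bool" where
  "charz t D g \<longleftrightarrow> tdom t = D \<and> (\<forall>x y. (x,y)\<in>tle2 t \<longleftrightarrow> x\<in>D \<and> y\<in>D \<and> (x=y \<or> ((x<y) \<longleftrightarrow> g x y)))"

lemma charz_tprod:
  assumes "charz t D g" "charz t' D' g'" "\<forall>x\<in>D. \<forall>y\<in>D'. x<y"
  shows "charz (tprod b t t') (D \<union> D') (\<lambda>x y. if x\<in>D \<and> y\<in>D then g x y else if x\<in>D' \<and> y\<in>D' then g' x y else b)"
  using assms unfolding charz_def tprod_le2 by (auto; fastforce)

lemma charz_sing: "charz (sing w k) {k} g"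
  unfolding charz_def by auto

lemma charz_cong:
  assumes "charz t D g" "D = D'" "\<And>x y. x\<in>D' \<Longrightarrow> y\<in>D' \<Longrightarrow> x\<noteq>y \<Longrightarrow> g x y = g' x y"
  shows "charz t D' g'"
  using assms unfolding charz_def by (metis (no_types))

lemma regions:
  fixes m M i j :: nat
  assumes "m < M" "m < i \<Longrightarrow> P" "i \<le> m \<Longrightarrow> m \<le> j \<Longrightarrow> j < M \<Longrightarrow> P" "j<m \<Longrightarrow> P"
    "i\<le>m \<Longrightarrow> m<M \<Longrightarrow> M \<le> j \<Longrightarrow> m=i \<or> M=j \<Longrightarrow> P" "i<m \<Longrightarrow> m<M \<Longrightarrow> M<j \<Longrightarrow> P"
  shows P
proof (cases "m < i")
  case True then show ?thesis using assms by blast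
next
  case False
  then have "i \<le> m" by simp
  show ?thesis
  proof (cases "j < M")
    case True then show ?thesis using assms \<open>i\<le>m\<close> by (cases "m \<le> j") auto
  next
    case False
    then show ?thesis using assms \<open>i\<le>m\<close> by (cases "m = i \<or> M = j") auto
  qed
qed

lemma enc_char:
  assumes N: "nesting_relation n nu"
  shows "q < p + f \<Longrightarrow> tdom (enc f b w nu p q) = {p..q} \<and> (\<forall>x y. (x,y) \<in> tle2 (enc f b w nu p q) \<longleftrightarrow>
     x\<in>{p..q} \<and> y\<in>{p..q} \<and> (x=y \<or> ((x<y) \<longleftrightarrow> (b \<longleftrightarrow> even (cc nu p q x y)))))"
proof (induction f arbitrary: b p q)
  case 0
  then show ?case by simp
next
  case (Suc f)
  note N1 = N1[OF N] and N2 = N2[OF N] and N2' = N2'[OF N] and N3 = N3[OF N] and N4 = N4[OF N]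
  have finS: "\<And>p q x y. finite (S nu p q x y)"
  proof -
    fix p q x y
    have "nu \<subseteq> {..n} \<times> {..n}"
    proof clarify
      fix a b assume "(a,b)\<in>nu" then show "a \<in> {..n} \<and> b \<in> {..n}" using N1[of a b] N4[of a b] by simp
    qed
    moreover have "S nu p q x y \<subseteq> nu" by (auto simp: S_def)
    ultimately have "S nu p q x y \<subseteq> {..n}\<times>{..n}" by blast
    then show "finite (S nu p q x y)" using finite_subset by blast
  qed
  show ?case
  proof (cases "q < p")
    case True
    then show ?thesis by simp
  next
    case nqp: False
    show ?thesis
    proof (cases "{(k, l). (k, l) \<in> nu \<and> p \<le> k \<and> l \<le> q} = {}")
      case True
      then have e: "enc (Suc f) b w nu p q = chain b w p q" using nqp by simp
      have "\<And>x y. S nu p q x y = {}" using True by (auto simp: S_def)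
      then have "\<And>x y. cc nu p q x y = 0" by (simp add: cc_def)
      then show ?thesis unfolding e using chain_char[of b w p q] by simp
    next
      case ne: False
      define i where "i = (LEAST k. \<exists>l. (k, l) \<in> nu \<and> p \<le> k \<and> l \<le> q)"
      define j where "j = (THE l. (i, l) \<in> nu)"
      have ex: "\<exists>k l. (k, l) \<in> nu \<and> p \<le> k \<and> l \<le> q" using ne by auto
      have Pi: "\<exists>l. (i, l) \<in> nu \<and> p \<le> i \<and> l \<le> q"
        unfolding i_def using ex by (rule LeastI_ex)
      have imin: "\<And>k l. (k,l)\<in>nu \<Longrightarrow> p\<le>k \<Longrightarrow> l\<le>q \<Longrightarrow> i\<le>k"
        unfolding i_def by (rule Least_le) blast
      obtain j0 where j0: "(i,j0)\<in>nu" "p\<le>i" "j0\<le>q" using Pi by blast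
      have jj: "j = j0" unfolding j_def using j0(1) N2 by blast
      have ij: "(i,j)\<in>nu" "p\<le>i" "j\<le>q" "i<j" "1 \<le> i" using j0 jj N1 N4 by auto
      have e: "enc (Suc f) b w nu p q = tprod b (chain b w p (i - 1)) (tprod b (tprod (\<not> b) (tprod (\<not> b) (sing w i) (enc f (\<not> b) w nu (i+1) (j-1))) (sing w j)) (enc f b w nu (j+1) q))"
        using nqp ne by (simp only: enc.simps Let_def if_False flip: i_def j_def)
      have IH1: "tdom (enc f (\<not> b) w nu (i+1) (j-1)) = {i+1..j-1} \<and> (\<forall>x y. (x,y) \<in> tle2 (enc f (\<not> b) w nu (i+1) (j-1)) \<longleftrightarrow>
         x\<in>{i+1..j-1} \<and> y\<in>{i+1..j-1} \<and> (x=y \<or> ((x<y) \<longleftrightarrow> (\<not> b \<longleftrightarrow> even (cc nu (i+1) (j-1) x y)))))"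
        using Suc.IH[of "j-1" "i+1" "\<not> b"] Suc.prems ij by auto
      have IH2: "tdom (enc f b w nu (j+1) q) = {j+1..q} \<and> (\<forall>x y. (x,y) \<in> tle2 (enc f b w nu (j+1) q) \<longleftrightarrow>
         x\<in>{j+1..q} \<and> y\<in>{j+1..q} \<and> (x=y \<or> ((x<y) \<longleftrightarrow> (b \<longleftrightarrow> even (cc nu (j+1) q x y)))))"
        using Suc.IH[of "q" "j+1" "b"] Suc.prems ij by auto
      have G: "\<And>k l. (k,l)\<in>nu \<Longrightarrow> p\<le>k \<Longrightarrow> l\<le>q \<Longrightarrow> k\<le>j \<Longrightarrow> j<l \<Longrightarrow> False"
      proof -
        fix k l assume a: "(k,l)\<in>nu" "p\<le>k" "l\<le>q" "k\<le>j" "j<l"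
        have "i \<le> k" using imin a by blast
        show False
        proof (cases "k = i")
          case True then show False using a ij N2 by fastforce
        next
          case False
          then have "i<k" using \<open>i\<le>k\<close> by simp
          then have "j<k \<or> l<j" using N3[OF ij(1) a(1)] by simp
          then show False using a by simp
        qed
      qed
      have C1: "\<And>x y. min x y < i \<Longrightarrow> cc nu p q x y = 0"
      proof -
        fix x y assume "min x y < i"
        then have "S nu p q (min x y) (max x y) = {}" using imin by (fastforce simp: S_def)
        then show "cc nu p q x y = 0" by (simp add: cc_def)
      qed
      have C2: "\<And>x y. i \<le> min x y \<Longrightarrow> min x y \<le> j \<Longrightarrow> j < max x y \<Longrightarrow> cc nu p q x y = 0"
      proof -
        fix x y assume a: "i \<le> min x y" "min x y \<le> j" "j < max x y"
        have "S nu p q (min x y) (max x y) = {}"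
        proof -
          { fix k l assume "(k,l) \<in> S nu p q (min x y) (max x y)"
            then have False using G[of k l] a by (auto simp: S_def min_def max_def split: if_splits) }
          then show ?thesis by auto
        qed
        then show "cc nu p q x y = 0" by (simp add: cc_def)
      qed
      have C3: "\<And>x y. j < min x y \<Longrightarrow> cc nu p q x y = cc nu (j+1) q x y"
      proof -
        fix x y assume a: "j < min x y"
        have "S nu p q (min x y) (max x y) = S nu (j+1) q (min x y) (max x y)"
        proof -
          { fix k l assume "(k,l) \<in> S nu p q (min x y) (max x y)"
            then have "j+1 \<le> k" using G[of k l] a by (cases "k \<le> j") (auto simp: S_def min_def max_def split: if_splits) }
          then show ?thesis using ij by (auto simp: S_def)
        qed
        then show "cc nu p q x y = cc nu (j+1) q x y" by (simp add: cc_def)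
      qed
      have C4: "\<And>x y. i \<le> min x y \<Longrightarrow> min x y < max x y \<Longrightarrow> max x y \<le> j \<Longrightarrow> (min x y = i \<or> max x y = j) \<Longrightarrow> cc nu p q x y = 1"
      proof -
        fix x y assume a: "i \<le> min x y" "min x y < max x y" "max x y \<le> j" "min x y = i \<or> max x y = j"
        have "S nu p q (min x y) (max x y) = {(i,j)}"
        proof
          show "{(i,j)} \<subseteq> S nu p q (min x y) (max x y)" using a ij by (auto simp: S_def)
        next
          show "S nu p q (min x y) (max x y) \<subseteq> {(i,j)}"
          proof
            fix z assume z: "z \<in> S nu p q (min x y) (max x y)"
            obtain k l where kl: "z = (k,l)" by (cases z)
            have k: "(k,l)\<in>nu" "p\<le>k" "l\<le>q" "k\<le>min x y" "max x y\<le>l" using z kl by (auto simp: S_def)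
            have "i \<le> k" using imin k by blast
            show "z \<in> {(i,j)}"
            proof (cases "k = i")
              case True then show ?thesis using k ij N2 kl by fastforce
            next
              case False
              then have ik: "i<k" using \<open>i\<le>k\<close> by simp
              have "\<not> j < l" using G k a by fastforce
              moreover have "l \<noteq> j" using N2' k ij False by blast
              ultimately have "l < j" by simp
              then show ?thesis using a k ik by simp
            qed
          qed
        qed
        then show "cc nu p q x y = 1" by (simp add: cc_def)
      qed
      have C5: "\<And>x y. i < min x y \<Longrightarrow> min x y < max x y \<Longrightarrow> max x y < j \<Longrightarrow> cc nu p q x y = Suc (cc nu (i+1) (j-1) x y)"
      proof -
        fix x y assume a: "i < min x y" "min x y < max x y" "max x y < j"
        have eq: "S nu p q (min x y) (max x y) = insert (i,j) (S nu (i+1) (j-1) (min x y) (max x y))"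
        proof
          show "insert (i,j) (S nu (i+1) (j-1) (min x y) (max x y)) \<subseteq> S nu p q (min x y) (max x y)"
            using a ij by (auto simp: S_def)
        next
          show "S nu p q (min x y) (max x y) \<subseteq> insert (i,j) (S nu (i+1) (j-1) (min x y) (max x y))"
          proof
            fix z assume z: "z \<in> S nu p q (min x y) (max x y)"
            obtain k l where kl: "z = (k,l)" by (cases z)
            have k: "(k,l)\<in>nu" "p\<le>k" "l\<le>q" "k\<le>min x y" "max x y\<le>l" using z kl by (auto simp: S_def)
            have "i \<le> k" using imin k by blast
            show "z \<in> insert (i,j) (S nu (i+1) (j-1) (min x y) (max x y))"
            proof (cases "k = i")
              case True then show ?thesis using k ij N2 kl by fastforce
            next
              case False
              then have ik: "i<k" using \<open>i\<le>k\<close> by simp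
              have "\<not> j < l" using G k a by fastforce
              moreover have "l \<noteq> j" using N2' k ij False by blast
              ultimately have "l < j" by simp
              then show ?thesis using a k ik kl by (auto simp: S_def)
            qed
          qed
        qed
        have "(i,j) \<notin> S nu (i+1) (j-1) (min x y) (max x y)" by (simp add: S_def)
        then show "cc nu p q x y = Suc (cc nu (i+1) (j-1) x y)" using eq finS by (simp add: cc_def)
      qed
      have CH: "charz (chain b w p (i - 1)) {p..i-1} (\<lambda>x y. b)"
        using chain_char[of b w p "i - 1"] unfolding charz_def by auto
      have E1: "charz (enc f (\<not> b) w nu (i+1) (j-1)) {i+1..j-1} (\<lambda>x y. (\<not> b \<longleftrightarrow> even (cc nu (i+1) (j-1) x y)))"
        using IH1 unfolding charz_def by blast
      have E2: "charz (enc f b w nu (j+1) q) {j+1..q} (\<lambda>x y. (b \<longleftrightarrow> even (cc nu (j+1) q x y)))"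
        using IH2 unfolding charz_def by blast
      have B1: "charz (tprod (\<not> b) (sing w i) (enc f (\<not> b) w nu (i+1) (j-1))) ({i} \<union> {i+1..j-1})
          (\<lambda>x y. if x\<in>{i} \<and> y\<in>{i} then True else if x\<in>{i+1..j-1} \<and> y\<in>{i+1..j-1} then (\<not> b \<longleftrightarrow> even (cc nu (i+1) (j-1) x y)) else \<not> b)"
        using ij by (rule_tac charz_tprod[OF charz_sing E1]) auto
      have B: "charz (tprod (\<not> b) (tprod (\<not> b) (sing w i) (enc f (\<not> b) w nu (i+1) (j-1))) (sing w j)) ({i} \<union> {i+1..j-1} \<union> {j})
          (\<lambda>x y. if x\<in>{i} \<union> {i+1..j-1} \<and> y\<in>{i} \<union> {i+1..j-1} then (if x\<in>{i} \<and> y\<in>{i} then True else if x\<in>{i+1..j-1} \<and> y\<in>{i+1..j-1} then (\<not> b \<longleftrightarrow> even (cc nu (i+1) (j-1) x y)) else \<not> b)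
              else if x\<in>{j} \<and> y\<in>{j} then True else \<not> b)"
        using ij by (rule_tac charz_tprod[OF B1 charz_sing]) auto
      have BR: "charz (tprod b (tprod (\<not> b) (tprod (\<not> b) (sing w i) (enc f (\<not> b) w nu (i+1) (j-1))) (sing w j)) (enc f b w nu (j+1) q)) ({i} \<union> {i+1..j-1} \<union> {j} \<union> {j+1..q})
          (\<lambda>x y. if x\<in>{i} \<union> {i+1..j-1} \<union> {j} \<and> y\<in>{i} \<union> {i+1..j-1} \<union> {j} then
              (if x\<in>{i} \<union> {i+1..j-1} \<and> y\<in>{i} \<union> {i+1..j-1} then (if x\<in>{i} \<and> y\<in>{i} then True else if x\<in>{i+1..j-1} \<and> y\<in>{i+1..j-1} then (\<not> b \<longleftrightarrow> even (cc nu (i+1) (j-1) x y)) else \<not> b)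
              else if x\<in>{j} \<and> y\<in>{j} then True else \<not> b)
             else if x\<in>{j+1..q} \<and> y\<in>{j+1..q} then (b \<longleftrightarrow> even (cc nu (j+1) q x y)) else b)"
        using ij by (rule_tac charz_tprod[OF B E2]) auto
      have T: "charz (enc (Suc f) b w nu p q) ({p..i-1} \<union> ({i} \<union> {i+1..j-1} \<union> {j} \<union> {j+1..q}))
          (\<lambda>x y. if x\<in>{p..i-1} \<and> y\<in>{p..i-1} then b else
            if x\<in>{i} \<union> {i+1..j-1} \<union> {j} \<union> {j+1..q} \<and> y\<in>{i} \<union> {i+1..j-1} \<union> {j} \<union> {j+1..q} then
            (if x\<in>{i} \<union> {i+1..j-1} \<union> {j} \<and> y\<in>{i} \<union> {i+1..j-1} \<union> {j} then
              (if x\<in>{i} \<union> {i+1..j-1} \<and> y\<in>{i} \<union> {i+1..j-1} then (if x\<in>{i} \<and> y\<in>{i} then True else if x\<in>{i+1..j-1} \<and> y\<in>{i+1..j-1} then (\<not> b \<longleftrightarrow> even (cc nu (i+1) (j-1) x y)) else \<not> b)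
              else if x\<in>{j} \<and> y\<in>{j} then True else \<not> b)
             else if x\<in>{j+1..q} \<and> y\<in>{j+1..q} then (b \<longleftrightarrow> even (cc nu (j+1) q x y)) else b) else b)"
        unfolding e using ij by (rule_tac charz_tprod[OF CH BR]) auto
      have dom: "{p..i-1} \<union> ({i} \<union> {i+1..j-1} \<union> {j} \<union> {j+1..q}) = {p..q}" using ij by auto
      have "charz (enc (Suc f) b w nu p q) {p..q} (\<lambda>x y. b \<longleftrightarrow> even (cc nu p q x y))"
      proof (rule charz_cong[OF T dom])
        fix x y assume xyd: "x \<in> {p..q}" "y \<in> {p..q}" and xy: "x \<noteq> y"
        show "(\<lambda>x y. if x\<in>{p..i-1} \<and> y\<in>{p..i-1} then b else
            if x\<in>{i} \<union> {i+1..j-1} \<union> {j} \<union> {j+1..q} \<and> y\<in>{i} \<union> {i+1..j-1} \<union> {j} \<union> {j+1..q} then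
            (if x\<in>{i} \<union> {i+1..j-1} \<union> {j} \<and> y\<in>{i} \<union> {i+1..j-1} \<union> {j} then
              (if x\<in>{i} \<union> {i+1..j-1} \<and> y\<in>{i} \<union> {i+1..j-1} then (if x\<in>{i} \<and> y\<in>{i} then True else if x\<in>{i+1..j-1} \<and> y\<in>{i+1..j-1} then (\<not> b \<longleftrightarrow> even (cc nu (i+1) (j-1) x y)) else \<not> b)
              else if x\<in>{j} \<and> y\<in>{j} then True else \<not> b)
             else if x\<in>{j+1..q} \<and> y\<in>{j+1..q} then (b \<longleftrightarrow> even (cc nu (j+1) q x y)) else b) else b) x y = (b \<longleftrightarrow> even (cc nu p q x y))"
        proof (rule regions[where m="min x y" and M="max x y" and i=i and j=j])
          show "min x y < max x y" using xy by (simp add: min_def max_def)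
        next
          assume R1: "min x y < i"
          then show ?thesis unfolding C1[OF R1] using xyd xy ij
            by (auto simp: min_def max_def split: if_splits)
        next
          assume R2: "i \<le> min x y" "min x y \<le> j" "j < max x y"
          then show ?thesis unfolding C2[OF R2] using xyd xy ij
            by (auto simp: min_def max_def split: if_splits)
        next
          assume R3: "j < min x y"
          then show ?thesis unfolding C3[OF R3] using xyd xy ij
            by (auto simp: min_def max_def split: if_splits)
        next
          assume R4: "i \<le> min x y" "min x y < max x y" "max x y \<le> j" "min x y = i \<or> max x y = j"
          then show ?thesis unfolding C4[OF R4] using xyd xy ij
            by (auto simp: min_def max_def split: if_splits)
        next
          assume R5: "i < min x y" "min x y < max x y" "max x y < j"
          then show ?thesis unfolding C5[OF R5] using xyd xy ij
            by (auto simp: min_def max_def split: if_splits)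
        qed
      qed
      then show ?thesis unfolding charz_def by blast
    qed
  qed
qed



lemma deep:
  assumes N: "nesting_relation n nu" and ij: "i < j"
  shows "odd (card (S nu 1 n i j)) \<longleftrightarrow>
    (\<exists>k l. (k, l) \<in> nu \<and> 1 \<le> k \<and> k \<le> i \<and> j \<le> l \<and> l \<le> n
             \<and> odd (nesting_depth nu k)
             \<and> \<not> (\<exists>k' l'. (k', l') \<in> nu \<and> k < k' \<and> k' \<le> i \<and> j \<le> l' \<and> l' < l))"
proof -
  note N1 = N1[OF N] and N2 = N2[OF N] and N2' = N2'[OF N] and N3 = N3[OF N] and N4 = N4[OF N]
  define E where "E = S nu 1 n i j"
  have Emem: "\<And>k l. (k,l)\<in>E \<longleftrightarrow> (k,l)\<in>nu \<and> k \<le> i \<and> j \<le> l"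
    unfolding E_def S_def using N4 by auto
  have finE: "finite E"
  proof -
    have "E \<subseteq> {..n}\<times>{..n}"
    proof clarify
      fix a b assume "(a,b)\<in>E" then show "a \<in> {..n} \<and> b \<in> {..n}" using N1[of a b] N4[of a b] Emem by simp
    qed
    then show ?thesis using finite_subset by blast
  qed
  show ?thesis
  proof (cases "E = {}")
    case True
    then show ?thesis using Emem unfolding E_def[symmetric] by auto
  next
    case False
    define k0 where "k0 = Max (fst ` E)"
    have "k0 \<in> fst ` E" unfolding k0_def using finE False by (intro Max_in) auto
    then obtain l0 where kl0: "(k0,l0)\<in>E" by force
    have kmax: "\<And>k l. (k,l)\<in>E \<Longrightarrow> k \<le> k0" unfolding k0_def using finE
      by (metis Max_ge finite_imageI fst_conv image_eqI)
    have kl0': "(k0,l0)\<in>nu" "k0 \<le> i" "j \<le> l0" using kl0 Emem by auto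
    have nd: "{(k', l'). (k', l') \<in> nu \<and> k' \<le> k0 \<and> k0 \<le> l'} = E"
    proof (intro set_eqI iffI)
      fix z assume "z \<in> {(k', l'). (k', l') \<in> nu \<and> k' \<le> k0 \<and> k0 \<le> l'}"
      then obtain k l where z: "z = (k,l)" "(k,l)\<in>nu" "k\<le>k0" "k0\<le>l" by blast
      have "j \<le> l"
      proof (cases "k = k0")
        case True then show ?thesis using N2 z kl0' by blast
      next
        case False
        then have "k < k0" using z by simp
        then have "l < k0 \<or> l0 < l" using N3[OF z(2) kl0'(1)] by simp
        moreover have "l \<noteq> k0" using N3[OF z(2) kl0'(1)] \<open>k<k0\<close> N1[OF kl0'(1)] by auto
        ultimately show ?thesis using z kl0' by auto
      qed
      then show "z \<in> E" using z kl0' Emem by auto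
    next
      fix z assume "z \<in> E"
      then obtain k l where z: "z = (k,l)" "(k,l)\<in>E" by (cases z) auto
      then show "z \<in> {(k', l'). (k', l') \<in> nu \<and> k' \<le> k0 \<and> k0 \<le> l'}"
        using kmax[OF z(2)] Emem kl0' ij by fastforce
    qed
    have ndk0: "nesting_depth nu k0 = card E" unfolding nesting_depth_def nd ..
    show ?thesis
    proof
      assume "odd (card (S nu 1 n i j))"
      then have "odd (nesting_depth nu k0)" using ndk0 E_def by simp
      moreover have "\<not> (\<exists>k' l'. (k', l') \<in> nu \<and> k0 < k' \<and> k' \<le> i \<and> j \<le> l' \<and> l' < l0)"
        using kmax Emem by fastforce
      moreover have "1 \<le> k0" "l0 \<le> n" using N4[OF kl0'(1)] by auto
      ultimately show "\<exists>k l. (k, l) \<in> nu \<and> 1 \<le> k \<and> k \<le> i \<and> j \<le> l \<and> l \<le> n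
             \<and> odd (nesting_depth nu k)
             \<and> \<not> (\<exists>k' l'. (k', l') \<in> nu \<and> k < k' \<and> k' \<le> i \<and> j \<le> l' \<and> l' < l)"
        using kl0' by blast
    next
      assume "\<exists>k l. (k, l) \<in> nu \<and> 1 \<le> k \<and> k \<le> i \<and> j \<le> l \<and> l \<le> n
             \<and> odd (nesting_depth nu k)
             \<and> \<not> (\<exists>k' l'. (k', l') \<in> nu \<and> k < k' \<and> k' \<le> i \<and> j \<le> l' \<and> l' < l)"
      then obtain k l where kl: "(k, l) \<in> nu" "k \<le> i" "j \<le> l" "odd (nesting_depth nu k)"
        "\<not> (\<exists>k' l'. (k', l') \<in> nu \<and> k < k' \<and> k' \<le> i \<and> j \<le> l' \<and> l' < l)" by blast
      have "k \<le> k0" using kmax Emem kl by blast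
      have "k = k0"
      proof (rule ccontr)
        assume "k \<noteq> k0"
        then have "k < k0" using \<open>k \<le> k0\<close> by simp
        then have "l < k0 \<or> l0 < l" using N3[OF kl(1) kl0'(1)] by simp
        then have "l0 < l" using kl kl0' ij by auto
        then show False using kl(5) kl0' \<open>k < k0\<close> by blast
      qed
      then show "odd (card (S nu 1 n i j))" using kl ndk0 E_def by simp
    qed
  qed
qed

theorem lemma5p3:
  fixes w :: "'a list" and nu :: "(nat \<times> nat) set" and i j :: nat
  assumes "nested_word w nu"
    and "1 \<le> i" and "i < j" and "j \<le> length w"
  shows "((j, i) \<in> tle2 (Phi_circ w nu) \<longleftrightarrow> (i, j) \<in> tle2 (Phi_bullet w nu))
       \<and> ((i, j) \<in> tle2 (Phi_bullet w nu) \<longleftrightarrow>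
          (\<exists>k l. (k, l) \<in> nu \<and> 1 \<le> k \<and> k \<le> i \<and> j \<le> l \<and> l \<le> length w
             \<and> odd (nesting_depth nu k)
             \<and> \<not> (\<exists>k' l'. (k', l') \<in> nu \<and> k < k' \<and> k' \<le> i \<and> j \<le> l' \<and> l' < l)))"
proof -
  have N: "nesting_relation (length w) nu" using assms(1) unfolding nested_word_def by blast
  have n1: "1 \<le> length w" using assms by simp
  have c: "(j, i) \<in> tle2 (Phi_circ w nu) \<longleftrightarrow> odd (card (S nu 1 (length w) i j))"
    using enc_char[OF N, of "length w" 1 "length w" True w] n1 assms(2-4)
    unfolding Phi_circ_def cc_def by auto
  have bu: "(i, j) \<in> tle2 (Phi_bullet w nu) \<longleftrightarrow> odd (card (S nu 1 (length w) i j))"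
    using enc_char[OF N, of "length w" 1 "length w" False w] n1 assms(2-4)
    unfolding Phi_bullet_def cc_def by auto
  show ?thesis using c bu deep[OF N assms(3)] by simp
qed

end
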